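(* Let $\mathcal{A}=(Q,\delta,s)$ be an NFA over a finite alphabet $\Sigma$ and let $\mathcal{P}$ be any forward-stable partition on $\mathcal{A}$. Then $B_{\mathcal{P}}:=\{(u,v)\in Q\times Q: u,v\in S \text{ for some } S\in\mathcal{P}\}$ is a bisimulation on $\mathcal{A}^{-1}$.
   Context: An NFA is $\mathcal{A}=(Q,\delta,s)$ with $\delta:Q\times\Sigma\to2^Q$; write $\delta_a(u)=\delta(u,a)$, $\delta_a(T)=\bigcup_{u\in T}\delta_a(u)$, $\delta_a^{-1}(u)=\{v:u\in\delta_a(v)\}$. $\mathcal{A}^{-1}=(Q,\delta^{-1},s)$ with $\delta^{-1}(u,a)=\delta^{-1}_a(u)$. A bisimulation on an NFA $(Q,\gamma,s)$ is a relation $B\subseteq Q\times Q$ such that for all $(u,v)\in B$ and $a\in\Sigma$: if $u'\in\gamma_a(u)$ then some $v'\in\gamma_a(v)$ has $(u',v')\in B$, and if $v'\in\gamma_a(v)$ then some $u'\in\gamma_a(u)$ has $(u',v')\in B$. A partition $\mathcal{P}$ of $Q$ is forward-stable on $\mathcal{A}$ if for any parts $S,T\in\mathcal{P}$ and every $a$, $S\subseteq\delta_a(T)$ or $S\cap\delta_a(T)=\emptyset$. *)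

theory Defs
  imports "HOL-Library.Disjoint_Sets"
begin

definition nfa :: "'q set \<Rightarrow> 'a set \<Rightarrow> ('q \<Rightarrow> 'a \<Rightarrow> 'q set) \<Rightarrow> 'q \<Rightarrow> bool" where
  "nfa Q \<Sigma> \<delta> s \<longleftrightarrow> finite Q \<and> finite \<Sigma> \<and> s \<in> Q \<and>
     (\<forall>u\<in>Q. \<forall>a\<in>\<Sigma>. \<delta> u a \<subseteq> Q)"

definition delta_set :: "('q \<Rightarrow> 'a \<Rightarrow> 'q set) \<Rightarrow> 'a \<Rightarrow> 'q set \<Rightarrow> 'q set" where
  "delta_set \<delta> a T = (\<Union>u\<in>T. \<delta> u a)"

definition inv_delta :: "'q set \<Rightarrow> ('q \<Rightarrow> 'a \<Rightarrow> 'q set) \<Rightarrow> 'q \<Rightarrow> 'a \<Rightarrow> 'q set" where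
  "inv_delta Q \<delta> u a = {v \<in> Q. u \<in> \<delta> v a}"

definition bisimulation :: "'q set \<Rightarrow> 'a set \<Rightarrow> ('q \<Rightarrow> 'a \<Rightarrow> 'q set) \<Rightarrow> ('q \<times> 'q) set \<Rightarrow> bool" where
  "bisimulation Q \<Sigma> \<gamma> B \<longleftrightarrow> B \<subseteq> Q \<times> Q \<and>
     (\<forall>(u, v)\<in>B. \<forall>a\<in>\<Sigma>.
        (\<forall>u'\<in>\<gamma> u a. \<exists>v'\<in>\<gamma> v a. (u', v') \<in> B) \<and>
        (\<forall>v'\<in>\<gamma> v a. \<exists>u'\<in>\<gamma> u a. (u', v') \<in> B))"

definition forward_stable :: "'q set \<Rightarrow> 'a set \<Rightarrow> ('q \<Rightarrow> 'a \<Rightarrow> 'q set) \<Rightarrow> 'q set set \<Rightarrow> bool" where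
  "forward_stable Q \<Sigma> \<delta> P \<longleftrightarrow> partition_on Q P \<and>
     (\<forall>S\<in>P. \<forall>T\<in>P. \<forall>a\<in>\<Sigma>. S \<subseteq> delta_set \<delta> a T \<or> S \<inter> delta_set \<delta> a T = {})"

definition part_rel :: "'q set set \<Rightarrow> ('q \<times> 'q) set" where
  "part_rel P = {(u, v). \<exists>S\<in>P. u \<in> S \<and> v \<in> S}"

end

theory Submission
  imports Defs
begin

lemma one_dir:
  assumes fs: "forward_stable Q \<Sigma> \<delta> P"
    and S: "S \<in> P" "u \<in> S" "v \<in> S" and a: "a \<in> \<Sigma>"
    and u': "u' \<in> inv_delta Q \<delta> u a"
  shows "\<exists>v'\<in>inv_delta Q \<delta> v a. (u', v') \<in> part_rel P"
proof -
  have pq: "partition_on Q P" using fs unfolding forward_stable_def by blast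
  have u'Q: "u' \<in> Q" and uu: "u \<in> \<delta> u' a" using u' unfolding inv_delta_def by auto
  obtain T where T: "T \<in> P" "u' \<in> T" using pq u'Q unfolding partition_on_def by blast
  have "u \<in> S \<inter> delta_set \<delta> a T" using S T uu unfolding delta_set_def by blast
  hence "S \<subseteq> delta_set \<delta> a T" using fs S T a unfolding forward_stable_def by blast
  then obtain v' where v': "v' \<in> T" "v \<in> \<delta> v' a" using S unfolding delta_set_def by blast
  have "v' \<in> Q" using pq T v' unfolding partition_on_def by blast
  hence "v' \<in> inv_delta Q \<delta> v a" using v' unfolding inv_delta_def by auto
  moreover have "(u', v') \<in> part_rel P" using T v' unfolding part_rel_def by blast
  ultimately show ?thesis by blast
qed

theorem lemma21:
  fixes Q :: "'q set" and \<Sigma> :: "'a set" and \<delta> :: "'q \<Rightarrow> 'a \<Rightarrow> 'q set" and s :: 'q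
    and P :: "'q set set"
  assumes "nfa Q \<Sigma> \<delta> s"
    and "forward_stable Q \<Sigma> \<delta> P"
  shows "bisimulation Q \<Sigma> (inv_delta Q \<delta>) (part_rel P)"
proof -
  have pq: "partition_on Q P" using assms(2) unfolding forward_stable_def by blast
  have sub: "part_rel P \<subseteq> Q \<times> Q" using pq unfolding part_rel_def partition_on_def by blast
  have "\<forall>(u, v)\<in>part_rel P. \<forall>a\<in>\<Sigma>.
        (\<forall>u'\<in>inv_delta Q \<delta> u a. \<exists>v'\<in>inv_delta Q \<delta> v a. (u', v') \<in> part_rel P) \<and>
        (\<forall>v'\<in>inv_delta Q \<delta> v a. \<exists>u'\<in>inv_delta Q \<delta> u a. (u', v') \<in> part_rel P)"
  proof (intro ballI, clarify, intro conjI ballI)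
    fix u v a u' assume uv: "(u, v) \<in> part_rel P" and a: "a \<in> \<Sigma>" and u': "u' \<in> inv_delta Q \<delta> u a"
    then obtain S where "S \<in> P" "u \<in> S" "v \<in> S" unfolding part_rel_def by blast
    thus "\<exists>v'\<in>inv_delta Q \<delta> v a. (u', v') \<in> part_rel P" using one_dir[OF assms(2)] a u' by blast
  next
    fix u v a v' assume uv: "(u, v) \<in> part_rel P" and a: "a \<in> \<Sigma>" and v': "v' \<in> inv_delta Q \<delta> v a"
    then obtain S where S: "S \<in> P" "u \<in> S" "v \<in> S" unfolding part_rel_def by blast
    from one_dir[OF assms(2) S(1) S(3) S(2) a v'] obtain u' where
      "u' \<in> inv_delta Q \<delta> u a" "(v', u') \<in> part_rel P" by blast
    thus "\<exists>u'\<in>inv_delta Q \<delta> u a. (u', v') \<in> part_rel P" unfolding part_rel_def by blast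
  qed
  thus ?thesis using sub unfolding bisimulation_def by blast
qed

end
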